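(* A standard quantum entity on a finite-dimensional complex Hilbert space $\mathcal{H}$ is state atomic: for states $p_{\bar c},p_{\bar d}$, if $O(e_E,p_{\bar c})\subseteq O(e_E,p_{\bar d})$ for every experiment $e_E$, then $p_{\bar c}=p_{\bar d}$.
   Context: A spectral family of $\mathcal{H}$ is a set $E=\{E_1,\dots,E_r\}$ of pairwise orthogonal nonzero orthogonal projections with $\sum_kE_k=I$. The standard quantum entity on $\mathcal{H}$ has states $p_{\bar c}$, one for each ray $\bar c$ (generated by a unit vector $c$), experiments $e_E$, one for each spectral family $E$, outcomes $x_{E_k}$, one for each orthogonal projection $E_k$, and outcome sets $O(e_E,p_{\bar c})=\{x_{E_k}:E_k\in E,\ E_kc\neq0\}$. *)

theory Defs
  imports "HOL-Analysis.Analysis"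
begin

text \<open>The finite-dimensional complex Hilbert space H is modelled as complex ^ 'n
  ('n a finite index type), with the standard Hermitian inner product.
  Operators are matrices complex ^ 'n ^ 'n.\<close>

definition hinner :: "complex ^ 'n \<Rightarrow> complex ^ 'n \<Rightarrow> complex" where
  "hinner x y = (\<Sum>i\<in>UNIV. cnj (x $ i) * y $ i)"

definition adjoint_mat :: "complex ^ 'n ^ 'n \<Rightarrow> complex ^ 'n ^ 'n" where
  "adjoint_mat A = (\<chi> i j. cnj (A $ j $ i))"

definition orth_proj :: "complex ^ 'n ^ 'n \<Rightarrow> bool" where
  "orth_proj P \<longleftrightarrow> P ** P = P \<and> adjoint_mat P = P"

definition spectral_family :: "(complex ^ 'n ^ 'n) set \<Rightarrow> bool" where
  "spectral_family E \<longleftrightarrow> finite E \<and> E \<noteq> {} \<and>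
     (\<forall>P\<in>E. orth_proj P \<and> P \<noteq> 0) \<and>
     (\<forall>P\<in>E. \<forall>Q\<in>E. P \<noteq> Q \<longrightarrow> P ** Q = 0) \<and>
     sum id E = mat 1"

definition unit_vec :: "complex ^ 'n \<Rightarrow> bool" where
  "unit_vec c \<longleftrightarrow> hinner c c = 1"

text \<open>The ray generated by c; the state p_c is identified with this ray.\<close>
definition ray :: "complex ^ 'n \<Rightarrow> (complex ^ 'n) set" where
  "ray c = {a *s c | a. True}"

text \<open>Outcome set O(e_E, p_c): outcomes x_{E_k} are identified with the projections E_k.\<close>
definition outcome_set :: "(complex ^ 'n ^ 'n) set \<Rightarrow> complex ^ 'n \<Rightarrow> (complex ^ 'n ^ 'n) set" where
  "outcome_set E c = {P \<in> E. P *v c \<noteq> 0}"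

end

theory Submission
  imports Defs
begin

definition pj :: "complex ^ 'n \<Rightarrow> complex ^ 'n ^ 'n" where
  "pj d = (\<chi> i j. d $ i * cnj (d $ j))"

lemma hinner_scale: "hinner d (a *s x) = a * hinner d x"
  by (simp add: hinner_def sum_distrib_left mult_ac)

lemma hinner_scale_l: "hinner (a *s x) y = cnj a * hinner x y"
  by (simp add: hinner_def sum_distrib_left mult_ac)

lemma pj_apply: "pj d *v x = hinner d x *s d"
  by (simp add: vec_eq_iff pj_def matrix_vector_mult_def hinner_def sum_distrib_left mult_ac)

lemma pj_idem: assumes "unit_vec d" shows "pj d ** pj d = pj d"
  unfolding matrix_eq
  using assms by (simp add: matrix_vector_mul_assoc[symmetric] pj_apply hinner_scale unit_vec_def)

lemma pj_adj: "adjoint_mat (pj d) = pj d"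
  by (simp add: adjoint_mat_def pj_def vec_eq_iff mult.commute)

lemma adj_diff: "adjoint_mat (mat 1 - A) = mat 1 - adjoint_mat A"
  by (simp add: adjoint_mat_def mat_def vec_eq_iff)

theorem mainTheorem16:
  fixes c d :: "complex ^ 'n"
  assumes "unit_vec c" and "unit_vec d"
    and "\<forall>E. spectral_family E \<longrightarrow> outcome_set E c \<subseteq> outcome_set E d"
  shows "ray c = ray d"
proof -
  define P where "P = pj d"
  define Q where "Q = mat 1 - P"
  have PP: "P ** P = P" using assms(2) by (simp add: P_def pj_idem)
  have Pd: "P *v d = d" using assms(2) by (simp add: P_def pj_apply unit_vec_def)
  have d0: "d \<noteq> 0" using assms(2) by (auto simp: unit_vec_def hinner_def)
  have Qd: "Q *v d = 0" using Pd by (simp add: Q_def matrix_vector_mult_diff_rdistrib)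
  have PQ: "P \<noteq> Q" using Pd Qd d0 by auto
  have P0: "P \<noteq> 0" using Pd d0 by auto
  have key: "Q *v c = 0"
  proof (rule ccontr)
    assume nz: "Q *v c \<noteq> 0"
    hence Q0: "Q \<noteq> 0" by auto
    have oP: "orth_proj P" using PP by (simp add: orth_proj_def P_def pj_adj)
    have PPx: "P *v (P *v x) = P *v x" for x
      by (simp add: matrix_vector_mul_assoc PP)
    have QQ: "Q ** Q = Q"
      unfolding matrix_eq Q_def
    proof
      fix x
      show "((mat 1 - P) ** (mat 1 - P)) *v x = (mat 1 - P) *v x"
        by (simp only: matrix_vector_mul_assoc[symmetric] matrix_vector_mult_diff_rdistrib
            matrix_vector_mult_diff_distrib matrix_vector_mul_lid PPx) simp
    qed
    have oQ: "orth_proj Q" using QQ by (simp add: orth_proj_def Q_def adj_diff P_def pj_adj)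
    have PQ0: "P ** Q = 0"
      unfolding matrix_eq Q_def
    proof
      fix x
      show "(P ** (mat 1 - P)) *v x = 0 *v x"
        by (simp only: matrix_vector_mul_assoc[symmetric] matrix_vector_mult_diff_rdistrib
            matrix_vector_mult_diff_distrib matrix_vector_mul_lid PPx) simp
    qed
    have QP0: "Q ** P = 0"
      unfolding matrix_eq Q_def
    proof
      fix x
      show "((mat 1 - P) ** P) *v x = 0 *v x"
        by (simp only: matrix_vector_mul_assoc[symmetric] matrix_vector_mult_diff_rdistrib
            matrix_vector_mult_diff_distrib matrix_vector_mul_lid PPx) simp
    qed
    have sf: "spectral_family {P, Q}"
      unfolding spectral_family_def using oP oQ P0 Q0 PQ PQ0 QP0
      by (auto simp: Q_def)
    have "Q \<in> outcome_set {P, Q} c" using nz by (simp add: outcome_set_def)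
    hence "Q \<in> outcome_set {P, Q} d" using assms(3) sf by blast
    thus False using Qd by (simp add: outcome_set_def)
  qed
  define a where "a = hinner d c"
  have ca: "c = a *s d"
    using key by (simp add: Q_def matrix_vector_mult_diff_rdistrib P_def pj_apply a_def)
  have "hinner c c = cnj a * a"
    using assms(2) by (simp add: ca hinner_scale hinner_scale_l unit_vec_def)
  hence a0: "a \<noteq> 0" using assms(1) by (auto simp: unit_vec_def)
  show ?thesis
  proof
    show "ray c \<subseteq> ray d" by (auto simp: ray_def ca vector_smult_assoc)
    show "ray d \<subseteq> ray c"
    proof
      fix x assume "x \<in> ray d"
      then obtain b where "x = b *s d" by (auto simp: ray_def)
      hence "x = (b / a) *s c" using a0 by (simp add: ca vector_smult_assoc)
      thus "x \<in> ray c" by (auto simp: ray_def)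
    qed
  qed
qed

end
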